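(* Let $M\ge1$, $R\in(-1,1)^{M+1}$, $T_n=\sqrt{1-R_n^2}$, $k\in\mathfrak{L}_M$, and $u=\min\{\mathbb{1},\tilde k\}$. Then the (finite) sum of weights of scattering sequences with transit count vector $k$ is $$\mathfrak{a}(R,k):=\sum_{\mathsf{p}\in\mathsf{S}_M:\ \kappa(\mathsf{p})=k}w(\mathsf{p})=\sum_{b\in V(k)}\binom{k}{b}\binom{\tilde k-u}{b-u}(-R)^{\tilde k-b}R^{k-b}T^{2b},$$ where $V(k)=\{b\in\mathbb{Z}^{M+1}:u\le b\le\min\{k,\tilde k\}\}$. In particular $\mathfrak{a}(R,k)=a(R,k)$, the $k$-amplitude polynomial evaluated at $R$.
   Context: Scattering sequences: $\mathsf{S}_M$ is the set of integer sequences $\mathsf{p}=(i_0,\ldots,i_L)$ with $L\ge2$, $i_0=i_L=-1$, $i_j\in\{0,\ldots,M\}$ for $1\le j\le L-1$, and $|i_{j+1}-i_j|=1$ for all $j$. $\kappa(\mathsf{p})=(k_0,\ldots,k_M)$: $k_n$ is the number of maximal blocks of consecutive indices $j\in\{0,\ldots,L\}$ with $i_j\ge n$. Weight: for $1\le j\le L-1$ with $i_j=m$, $w_j=R_m$ if $i_{j-1}=i_{j+1}=m-1$; $w_j=-R_m$ if $i_{j-1}=i_{j+1}=m+1$; $w_j=\sqrt{1-R_m^2}$ otherwise; $w(\mathsf{p})=\prod_{j=1}^{L-1}w_j$. $\mathfrak{L}_M\subset\mathbb{Z}^{M+1}_{\geq0}$: all $k$ with $k_0=1$ and $k_n>0\Rightarrow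 k_{n-1}>0$ ($1\le n\le M$). $\tilde k=(k_1,\ldots,k_M,0)$; $\mathbb{1}=(1,\ldots,1)$; inequalities and $\min$ entrywise; $S^d=\prod_n S_n^{d_n}$; $\binom{k}{b}=\prod_n\binom{k_n}{b_n}$. The amplitude polynomial is $a(x,k)=\sum_{b\in V(k)}\binom{k}{b}\binom{\tilde k-u}{b-u}(-x)^{\tilde k-b}x^{k-b}\prod_n(1-x_n^2)^{b_n}$. *)

theory Defs
  imports Complex_Main
begin

text \<open>Integer vectors in Z^{M+1} are represented as functions nat => _ ; only the
  indices 0..M are meaningful (vectors in L_M are required to vanish beyond M).\<close>

definition scat_seqs :: "nat \<Rightarrow> int list set" where
  "scat_seqs M = {p. length p \<ge> 3 \<and> p ! 0 = -1 \<and> p ! (length p - 1) = -1 \<and>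
     (\<forall>j. 1 \<le> j \<and> j \<le> length p - 2 \<longrightarrow> 0 \<le> p ! j \<and> p ! j \<le> int M) \<and>
     (\<forall>j < length p - 1. \<bar>p ! (Suc j) - p ! j\<bar> = 1)}"

text \<open>kappa p n = number of maximal blocks of consecutive indices j with i_j >= n,
  counted via the first index of each block.\<close>
definition kappa :: "int list \<Rightarrow> nat \<Rightarrow> nat" where
  "kappa p n = card {j. j < length p \<and> p ! j \<ge> int n \<and> (j = 0 \<or> p ! (j - 1) < int n)}"

definition step_weight :: "(nat \<Rightarrow> real) \<Rightarrow> int list \<Rightarrow> nat \<Rightarrow> real" where
  "step_weight R p j =
     (let m = p ! j in
      if p ! (j - 1) = m - 1 \<and> p ! (Suc j) = m - 1 then R (nat m)
      else if p ! (j - 1) = m + 1 \<and> p ! (Suc j) = m + 1 then - R (nat m)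
      else sqrt (1 - (R (nat m))\<^sup>2))"

definition weight :: "(nat \<Rightarrow> real) \<Rightarrow> int list \<Rightarrow> real" where
  "weight R p = (\<Prod>j\<in>{1..<length p - 1}. step_weight R p j)"

definition Lset :: "nat \<Rightarrow> (nat \<Rightarrow> nat) set" where
  "Lset M = {k. k 0 = 1 \<and> (\<forall>n. 1 \<le> n \<and> n \<le> M \<longrightarrow> k n > 0 \<longrightarrow> k (n - 1) > 0) \<and>
                (\<forall>n > M. k n = 0)}"

definition ktil :: "nat \<Rightarrow> (nat \<Rightarrow> nat) \<Rightarrow> nat \<Rightarrow> nat" where
  "ktil M k n = (if n < M then k (Suc n) else 0)"

definition uvec :: "nat \<Rightarrow> (nat \<Rightarrow> nat) \<Rightarrow> nat \<Rightarrow> nat" where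
  "uvec M k n = min 1 (ktil M k n)"

definition Vset :: "nat \<Rightarrow> (nat \<Rightarrow> nat) \<Rightarrow> (nat \<Rightarrow> nat) set" where
  "Vset M k = {b. (\<forall>n \<le> M. uvec M k n \<le> b n \<and> b n \<le> min (k n) (ktil M k n)) \<and>
                  (\<forall>n > M. b n = 0)}"

definition amp_poly :: "nat \<Rightarrow> (nat \<Rightarrow> real) \<Rightarrow> (nat \<Rightarrow> nat) \<Rightarrow> real" where
  "amp_poly M x k = (\<Sum>b\<in>Vset M k.
     (\<Prod>n\<le>M. real (k n choose b n)) *
     (\<Prod>n\<le>M. real ((ktil M k n - uvec M k n) choose (b n - uvec M k n))) *
     (\<Prod>n\<le>M. (- x n) ^ (ktil M k n - b n)) *
     (\<Prod>n\<le>M. x n ^ (k n - b n)) *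
     (\<Prod>n\<le>M. (1 - (x n)\<^sup>2) ^ b n))"

end

theory Submission
  imports Defs "HOL-Library.FuncSet"
begin

datatype tree = Node "tree list"

fun kids :: "tree \<Rightarrow> tree list" where "kids (Node ts) = ts"

fun walk :: "nat \<Rightarrow> tree \<Rightarrow> int list" where
  "walk m (Node ts) = int m # concat (map (\<lambda>s. walk (Suc m) s @ [int m]) ts)"

lemma walk_ne[simp]: "walk m t \<noteq> []"
  by (cases t) simp

lemma hd_walk[simp]: "hd (walk m t) = int m"
  by (cases t) simp

lemma last_concat_block: "ts \<noteq> [] \<Longrightarrow> last (concat (map (\<lambda>s. f s @ [x]) ts)) = x"
  by (induction ts) auto

lemma last_walk[simp]: "last (walk m t) = int m"
  by (cases t) (auto simp: last_concat_block)

lemma walk_vals: "x \<in> set (walk m t) \<Longrightarrow> int m \<le> x"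
proof (induction m t arbitrary: x rule: walk.induct)
  case (1 m ts)
  from 1(2) have "x = int m \<or> (\<exists>s\<in>set ts. x \<in> set (walk (Suc m) s))" by (auto split: if_splits)
  then show ?case using 1(1) by fastforce
qed

lemma app_split_uniq: "x \<notin> set xs \<Longrightarrow> x \<notin> set ys \<Longrightarrow> xs @ x # zs = ys @ x # ws \<Longrightarrow> xs = ys \<and> zs = ws"
proof (induction xs arbitrary: ys)
  case Nil
  then show ?case by (cases ys) auto
next
  case (Cons a as)
  then show ?case by (cases ys) auto
qed

lemma walk_succ: "successively (\<lambda>a b. \<bar>b - a\<bar> = 1) (walk m t)"
proof (induction m t rule: walk.induct)
  case (1 m ts)
  have "successively (\<lambda>a b. \<bar>b - a\<bar> = 1) (int m # concat (map (\<lambda>s. walk (Suc m) s @ [int m]) ts))"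
    using 1
  proof (induction ts)
    case Nil
    then show ?case by simp
  next
    case (Cons s ss)
    have A: "successively (\<lambda>a b. \<bar>b - a\<bar> = 1) (walk (Suc m) s)" using Cons.prems by simp
    have B: "successively (\<lambda>a b. \<bar>b - a\<bar> = 1) (int m # concat (map (\<lambda>s. walk (Suc m) s @ [int m]) ss))"
      using Cons by simp
    have "int m # concat (map (\<lambda>s. walk (Suc m) s @ [int m]) (s # ss)) =
       [int m] @ walk (Suc m) s @ (int m # concat (map (\<lambda>s. walk (Suc m) s @ [int m]) ss))" by simp
    also have "successively (\<lambda>a b. \<bar>b - a\<bar> = 1) \<dots>"
      using A B by (simp only: successively_append_iff) auto
    finally show ?case .
  qed
  then show ?case by simp
qed

lemma walk_inj: "walk m t1 = walk m t2 \<Longrightarrow> t1 = t2"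
proof (induction t1 arbitrary: t2 m)
  case (Node ts1)
  obtain ts2 where t2: "t2 = Node ts2" by (cases t2)
  have "concat (map (\<lambda>s. walk (Suc m) s @ [int m]) ts1) = concat (map (\<lambda>s. walk (Suc m) s @ [int m]) ts2)"
    using Node.prems t2 by simp
  then have "ts1 = ts2" using Node.IH
  proof (induction ts1 arbitrary: ts2)
    case Nil
    then show ?case by (cases ts2) auto
  next
    case (Cons a as)
    show ?case
    proof (cases ts2)
      case Nil
      then show ?thesis using Cons.prems by simp
    next
      case (Cons b bs)
      have na: "int m \<notin> set (walk (Suc m) a)" using walk_vals by fastforce
      have nb: "int m \<notin> set (walk (Suc m) b)" using walk_vals by fastforce
      have "walk (Suc m) a @ int m # concat (map (\<lambda>s. walk (Suc m) s @ [int m]) as) =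
            walk (Suc m) b @ int m # concat (map (\<lambda>s. walk (Suc m) s @ [int m]) bs)"
        using Cons.prems(1) Cons by simp
      then have e1: "walk (Suc m) a = walk (Suc m) b" and
        e2: "concat (map (\<lambda>s. walk (Suc m) s @ [int m]) as) = concat (map (\<lambda>s. walk (Suc m) s @ [int m]) bs)"
        using app_split_uniq[OF na nb] by blast+
      have "a = b" using Cons.prems(2) e1 by simp
      moreover have "as = bs" using Cons.IH[OF e2] Cons.prems(2) by simp
      ultimately show ?thesis using Cons by simp
    qed
  qed
  then show ?case using t2 by simp
qed

abbreviation "stp \<equiv> (\<lambda>a b::int. \<bar>b - a\<bar> = 1)"

lemma walk_surj:
  "xs \<noteq> [] \<Longrightarrow> hd xs = int m \<Longrightarrow> last xs = int m \<Longrightarrow> (\<forall>x\<in>set xs. int m \<le> x) \<Longrightarrow>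
   successively stp xs \<Longrightarrow> \<exists>t. xs = walk m t"
proof (induction "length xs" arbitrary: xs m rule: less_induct)
  case less
  show ?case
  proof (cases xs)
    case Nil then show ?thesis using less by simp
  next
    case (Cons x ys)
    have x: "x = int m" using less Cons by simp
    show ?thesis
    proof (cases ys)
      case Nil
      then show ?thesis using x Cons by (intro exI[of _ "Node []"]) simp
    next
      case (Cons y zs)
      have "y \<ge> int m" using less(5) \<open>xs = x # ys\<close> Cons by simp
      moreover have "\<bar>y - x\<bar> = 1" using less(6) \<open>xs = x # ys\<close> Cons by simp
      ultimately have y: "y = int m + 1" using x by linarith
      have "int m \<in> set ys" using less(4) \<open>xs = x # ys\<close> Cons by (metis last_ConsR last_in_set list.simps(3))
      then obtain as bs where ys: "ys = as @ int m # bs" and nas: "int m \<notin> set as"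
        using split_list_first by metis
      have asne: "as \<noteq> []" using ys Cons y by (cases as) auto
      have xs: "xs = int m # as @ int m # bs" using \<open>xs = x # ys\<close> x ys by simp
      have sas: "successively stp as" and sbs: "successively stp (int m # bs)"
        and lst: "stp (last as) (int m)"
        using less(6) asne unfolding xs
        by (auto simp: successively_append_iff successively_Cons)
      have hdas: "hd as = int m + 1" using ys Cons y asne by (cases as) auto
      have asv: "\<forall>x\<in>set as. int (Suc m) \<le> x"
      proof
        fix z assume z: "z \<in> set as"
        then have "int m \<le> z" "z \<noteq> int m" using less(5) nas unfolding xs by auto
        then show "int (Suc m) \<le> z" by linarith
      qed
      have "int (Suc m) \<le> last as" using asv last_in_set[OF asne] by blast
      then have lastas: "last as = int (Suc m)"
        using lst by (auto simp: abs_if split: if_splits)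
      obtain s where s: "as = walk (Suc m) s"
        using less(1)[of as "Suc m"] asne hdas lastas asv sas unfolding xs by force
      have lbs: "last (int m # bs) = int m" using less(4) unfolding xs
        by (cases bs) auto
      obtain t where t: "int m # bs = walk m t"
        using less(1)[of "int m # bs" m] lbs sbs less(5) asne unfolding xs by force
      obtain ts where tt: "t = Node ts" by (cases t)
      have "xs = walk m (Node (s # ts))" using xs s t tt by simp
      then show ?thesis by blast
    qed
  qed
qed

fun hb :: "tree \<Rightarrow> nat \<Rightarrow> bool" where
  "hb (Node ts) h = (0 < h \<and> (\<forall>s\<in>set ts. hb s (h - 1)))"

lemma hb_walk: "m \<le> Suc M \<Longrightarrow> set (walk m t) \<subseteq> {..int M} \<longleftrightarrow> hb t (Suc M - m)"
proof (induction m t arbitrary: M rule: walk.induct)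
  case (1 m ts)
  show ?case
  proof (cases "m = Suc M")
    case True
    then show ?thesis by simp
  next
    case False
    then have "m \<le> M" using 1(2) by simp
    have "set (walk m (Node ts)) \<subseteq> {..int M} \<longleftrightarrow> (\<forall>s\<in>set ts. set (walk (Suc m) s) \<subseteq> {..int M})"
      using \<open>m \<le> M\<close> by auto
    also have "\<dots> \<longleftrightarrow> (\<forall>s\<in>set ts. hb s (Suc M - Suc m))"
      using 1(1) \<open>m \<le> M\<close> by simp
    finally show ?thesis using \<open>m \<le> M\<close> by (simp add: Suc_diff_le)
  qed
qed

definition path :: "tree \<Rightarrow> int list" where "path t = -1 # walk 0 t @ [-1]"

lemma scat_char: "scat_seqs M = path ` {t. hb t (Suc M)}"
proof
  show "path ` {t. hb t (Suc M)} \<subseteq> scat_seqs M"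
  proof clarify
    fix t assume h: "hb t (Suc M)"
    have vs: "set (walk 0 t) \<subseteq> {0..int M}" using hb_walk[of 0 M t] h walk_vals[of _ 0 t] by auto
    define w where "w = walk 0 t"
    have wne: "w \<noteq> []" by (simp add: w_def)
    have p: "path t = -1 # w @ [-1]" by (simp add: path_def w_def)
    have "successively stp (path t)"
      unfolding p using walk_succ[of 0 t] wne
      by (auto simp: successively_append_iff successively_Cons w_def)
    then have st: "\<forall>j < length (path t) - 1. \<bar>path t ! (Suc j) - path t ! j\<bar> = 1"
      by (auto simp: successively_conv_nth)
    have mid: "\<forall>j. 1 \<le> j \<and> j \<le> length (path t) - 2 \<longrightarrow> 0 \<le> path t ! j \<and> path t ! j \<le> int M"
    proof (intro allI impI)
      fix j assume j: "1 \<le> j \<and> j \<le> length (path t) - 2"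
      then have "path t ! j = w ! (j - 1)" "j - 1 < length w" unfolding p
        by (auto simp: nth_append nth_Cons split: nat.splits)
      then show "0 \<le> path t ! j \<and> path t ! j \<le> int M" using vs nth_mem unfolding w_def by force
    qed
    have "length (path t) \<ge> 3" using wne unfolding p by (cases w) auto
    moreover have "path t ! (length (path t) - 1) = -1" unfolding p by (simp add: nth_append)
    ultimately show "path t \<in> scat_seqs M" using st mid unfolding scat_seqs_def by (simp add: p)
  qed
next
  show "scat_seqs M \<subseteq> path ` {t. hb t (Suc M)}"
  proof
    fix p assume p: "p \<in> scat_seqs M"
    then have len: "length p \<ge> 3" and p0: "p ! 0 = -1" and pl: "p ! (length p - 1) = -1"
      and mid: "\<forall>j. 1 \<le> j \<and> j \<le> length p - 2 \<longrightarrow> 0 \<le> p ! j \<and> p ! j \<le> int M"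
      and st: "\<forall>j < length p - 1. \<bar>p ! (Suc j) - p ! j\<bar> = 1"
      unfolding scat_seqs_def by auto
    define xs where "xs = take (length p - 2) (drop 1 p)"
    have pe: "p = -1 # xs @ [-1]"
    proof (rule nth_equalityI)
      show "length p = length (-1 # xs @ [-1])" using len by (simp add: xs_def)
      fix i assume i: "i < length p"
      consider "i = 0" | "i = length p - 1" | "0 < i \<and> i < length p - 1" using i by linarith
      then show "p ! i = (-1 # xs @ [-1]) ! i"
      proof cases
        case 1 then show ?thesis using p0 by simp
      next
        case 2 then show ?thesis using pl len by (simp add: xs_def nth_append numeral_2_eq_2)
      next
        case 3
        then obtain i' where i': "i = Suc i'" "i' < length p - 2" by (cases i) auto
        then show ?thesis using len by (simp add: xs_def nth_append)
      qed
    qed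
    have xne: "xs \<noteq> []" using len by (simp add: xs_def)
    have xv: "\<forall>x\<in>set xs. 0 \<le> x \<and> x \<le> int M"
    proof
      fix x assume "x \<in> set xs"
      then obtain i where i: "i < length xs" "x = xs ! i" by (auto simp: in_set_conv_nth)
      have "p ! Suc i = x" using i pe by (simp add: nth_append)
      moreover have "1 \<le> Suc i \<and> Suc i \<le> length p - 2" using i pe by simp
      ultimately show "0 \<le> x \<and> x \<le> int M" using mid by blast
    qed
    have sp: "successively stp p" using st by (auto simp: successively_conv_nth)
    then have sx: "successively stp xs" and h1: "stp (-1) (hd xs)" and h2: "stp (last xs) (-1)"
      using xne unfolding pe by (auto simp: successively_append_iff successively_Cons)
    have "hd xs = 0" using h1 xv hd_in_set[OF xne] by force
    moreover have "last xs = 0" using h2 xv last_in_set[OF xne] by force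
    ultimately obtain t where t: "xs = walk 0 t"
      using walk_surj[of xs 0] xne xv sx by auto
    have "hb t (Suc M)" using hb_walk[of 0 M t] xv t by auto
    then show "p \<in> path ` {t. hb t (Suc M)}" using pe t by (auto simp: path_def)
  qed
qed

lemma path_inj: "inj path"
  by (rule injI) (auto simp: path_def intro: walk_inj)

fun kc :: "int \<Rightarrow> int \<Rightarrow> int list \<Rightarrow> nat" where
  "kc n prev [] = 0"
| "kc n prev (x # xs) = (if n \<le> x \<and> prev < n then 1 else 0) + kc n x xs"

lemma kc_card: "card {j. j < length l \<and> n \<le> l ! j \<and> (if j = 0 then prev < n else l ! (j - 1) < n)} = kc n prev l"
proof (induction l arbitrary: prev)
  case Nil
  then show ?case by simp
next
  case (Cons x xs)
  let ?S = "{j. j < length xs \<and> n \<le> xs ! j \<and> (if j = 0 then x < n else xs ! (j - 1) < n)}"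
  have eq: "{j. j < length (x # xs) \<and> n \<le> (x # xs) ! j \<and> (if j = 0 then prev < n else (x # xs) ! (j - 1) < n)}
      = (if n \<le> x \<and> prev < n then {0} else {}) \<union> Suc ` ?S"
  proof (rule set_eqI)
    fix j show "j \<in> {j. j < length (x # xs) \<and> n \<le> (x # xs) ! j \<and> (if j = 0 then prev < n else (x # xs) ! (j - 1) < n)}
      \<longleftrightarrow> j \<in> (if n \<le> x \<and> prev < n then {0} else {}) \<union> Suc ` ?S"
      by (cases j) (auto simp: nth_Cons split: nat.splits)
  qed
  have "card ((if n \<le> x \<and> prev < n then {0} else {}) \<union> Suc ` ?S) =
        card (if n \<le> x \<and> prev < n then {0::nat} else {}) + card (Suc ` ?S)"
    by (rule card_Un_disjoint) auto
  also have "card (Suc ` ?S) = card ?S" by (simp add: card_image)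
  finally show ?case using eq Cons.IH[of x] by simp
qed

lemma kappa_kc: "kappa p n = kc (int n) (int n - 1) p"
proof -
  have "{j. j < length p \<and> p ! j \<ge> int n \<and> (j = 0 \<or> p ! (j - 1) < int n)} =
        {j. j < length p \<and> int n \<le> p ! j \<and> (if j = 0 then int n - 1 < int n else p ! (j - 1) < int n)}"
    by auto
  then show ?thesis unfolding kappa_def using kc_card by simp
qed

lemma kc_append: "kc n prev (xs @ ys) = kc n prev xs + kc n (last (prev # xs)) ys"
  by (induction xs arbitrary: prev) auto

lemma kc0: "n \<le> prev \<Longrightarrow> \<forall>x\<in>set xs. n \<le> x \<Longrightarrow> kc n prev xs = 0"
  by (induction xs arbitrary: prev) auto

fun lev :: "nat \<Rightarrow> tree \<Rightarrow> nat" where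
  "lev 0 t = 1"
| "lev (Suc n) (Node ts) = sum_list (map (lev n) ts)"

lemma kc_block:
  assumes "\<forall>s\<in>set ts. kc (int n) (int m) (walk (Suc m) s) = L s" and "m < n"
  shows "kc (int n) (int m) (concat (map (\<lambda>s. walk (Suc m) s @ [int m]) ts)) = sum_list (map L ts)"
  using assms
proof (induction ts)
  case Nil
  then show ?case by simp
next
  case (Cons s ss)
  have "concat (map (\<lambda>s. walk (Suc m) s @ [int m]) (s # ss)) =
        (walk (Suc m) s @ [int m]) @ concat (map (\<lambda>s. walk (Suc m) s @ [int m]) ss)" by simp
  then show ?case using Cons by (simp only: kc_append) (simp add: kc_append)
qed

lemma kc_walk: "kc (int n) (int m - 1) (walk m t) = (if n < m then 0 else lev (n - m) t)"
proof (induction m t arbitrary: n rule: walk.induct)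
  case (1 m ts)
  let ?B = "concat (map (\<lambda>s. walk (Suc m) s @ [int m]) ts)"
  have Bv: "\<forall>x\<in>set ?B. int m \<le> x"
  proof
    fix x assume "x \<in> set ?B"
    then have "x = int m \<or> (\<exists>s\<in>set ts. x \<in> set (walk (Suc m) s))" by (auto split: if_splits)
    then show "int m \<le> x" using walk_vals[of x "Suc m"] by force
  qed
  have "kc (int n) (int m - 1) (walk m (Node ts)) = (if int n \<le> int m \<and> int m - 1 < int n then 1 else 0) + kc (int n) (int m) ?B"
    by simp
  show ?case
  proof (cases "n \<le> m")
    case True
    have "\<forall>x\<in>set ?B. int n \<le> x" using Bv True by force
    then have "kc (int n) (int m) ?B = 0" using True by (intro kc0) auto
    then show ?thesis using True by auto
  next
    case False
    have IH: "\<forall>s\<in>set ts. kc (int n) (int m) (walk (Suc m) s) = lev (n - Suc m) s"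
      using 1 False by auto
    have "kc (int n) (int m) ?B = sum_list (map (lev (n - Suc m)) ts)"
      using kc_block[OF IH] False by simp
    moreover have "n - m = Suc (n - Suc m)" using False by simp
    ultimately show ?thesis using False by simp
  qed
qed

lemma kappa_path: "kappa (path t) = (\<lambda>n. lev n t)"
proof
  fix n
  have "kappa (path t) n = kc (int n) (-1) (walk 0 t @ [-1])"
    by (simp add: kappa_kc path_def)
  also have "\<dots> = lev n t" using kc_walk[of n 0 t] by (simp add: kc_append)
  finally show "kappa (path t) n = lev n t" .
qed

definition sw :: "(nat \<Rightarrow> real) \<Rightarrow> int \<Rightarrow> int \<Rightarrow> int \<Rightarrow> real" where
  "sw R a m c = (if a = m - 1 \<and> c = m - 1 then R (nat m)
      else if a = m + 1 \<and> c = m + 1 then - R (nat m) else sqrt (1 - (R (nat m))\<^sup>2))"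

fun wm :: "(nat \<Rightarrow> real) \<Rightarrow> int \<Rightarrow> int list \<Rightarrow> int \<Rightarrow> real" where
  "wm R a [] c = 1"
| "wm R a (x # xs) c = sw R a x (hd (xs @ [c])) * wm R x xs c"

lemma wm_append: "wm R a (xs @ ys) c = wm R a xs (hd (ys @ [c])) * wm R (last (a # xs)) ys c"
proof (induction xs arbitrary: a)
  case Nil then show ?case by simp
next
  case (Cons x xs)
  have "hd (xs @ ys @ [c]) = hd (xs @ [hd (ys @ [c])])" by (cases xs) auto
  then show ?case using Cons by simp
qed

lemma weight_wm: "weight R (a # xs @ [c]) = wm R a xs c"
proof (induction xs arbitrary: a)
  case Nil
  then show ?case by (simp add: weight_def)
next
  case (Cons x xs)
  let ?f = "\<lambda>p j. step_weight R p j"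
  have sw_eq: "\<And>p j. step_weight R p j = sw R (p ! (j - 1)) (p ! j) (p ! Suc j)"
    by (simp add: step_weight_def sw_def Let_def)
  have "weight R (a # (x # xs) @ [c]) = (\<Prod>j\<in>{1..<length xs + 2}. ?f (a # x # xs @ [c]) j)"
    by (simp add: weight_def)
  also have "\<dots> = ?f (a # x # xs @ [c]) 1 * (\<Prod>j\<in>{Suc 1..<Suc (length xs + 1)}. ?f (a # x # xs @ [c]) j)"
    by (subst prod.atLeast_Suc_lessThan) auto
  also have "(\<Prod>j\<in>{Suc 1..<Suc (length xs + 1)}. ?f (a # x # xs @ [c]) j) =
       (\<Prod>j\<in>{1..<length xs + 1}. ?f (a # x # xs @ [c]) (Suc j))"
    by (rule prod.shift_bounds_Suc_ivl)
  also have "\<dots> = (\<Prod>j\<in>{1..<length xs + 1}. ?f (x # xs @ [c]) j)"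
    by (rule prod.cong) (auto simp: sw_eq)
  also have "\<dots> = weight R (x # xs @ [c])" by (simp add: weight_def)
  also have "\<dots> = wm R x xs c" by (rule Cons.IH)
  finally show ?case
    by (simp add: sw_eq nth_append) (cases xs; simp)
qed

definition nodew :: "(nat \<Rightarrow> real) \<Rightarrow> nat \<Rightarrow> nat \<Rightarrow> real" where
  "nodew R d r = (if r = 0 then R d else (sqrt (1 - (R d)\<^sup>2))\<^sup>2 * (- R d) ^ (r - 1))"

fun tw :: "(nat \<Rightarrow> real) \<Rightarrow> nat \<Rightarrow> tree \<Rightarrow> real" where
  "tw R d (Node ts) = nodew R d (length ts) * prod_list (map (tw R (Suc d)) ts)"

lemma wm_block:
  assumes "ts \<noteq> []" "\<forall>s\<in>set ts. wm R (int d) (walk (Suc d) s) (int d) = tw R (Suc d) s"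
  shows "wm R (int d) (concat (map (\<lambda>s. walk (Suc d) s @ [int d]) ts)) (int d - 1) =
     prod_list (map (tw R (Suc d)) ts) * (- R d) ^ (length ts - 1) * sqrt (1 - (R d)\<^sup>2)"
  using assms
proof (induction ts)
  case Nil then show ?case by simp
next
  case (Cons s ss)
  let ?rest = "concat (map (\<lambda>s. walk (Suc d) s @ [int d]) ss)"
  have e: "concat (map (\<lambda>s. walk (Suc d) s @ [int d]) (s # ss)) = walk (Suc d) s @ (int d # ?rest)" by simp
  have ws: "wm R (int d) (walk (Suc d) s) (int d) = tw R (Suc d) s" using Cons.prems by simp
  have lw: "last (int d # walk (Suc d) s) = int d + 1" by simp
  show ?case
  proof (cases ss)
    case Nil
    then show ?thesis unfolding e wm_append using ws by (simp add: sw_def)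
  next
    case (Cons s' ss')
    have hr: "hd (?rest @ [int d - 1]) = int d + 1" using Cons by simp
    have IH: "wm R (int d) ?rest (int d - 1) = prod_list (map (tw R (Suc d)) ss) * (- R d) ^ (length ss - 1) * sqrt (1 - (R d)\<^sup>2)"
      using Cons.IH Cons.prems Cons by simp
    have "wm R (int d) (walk (Suc d) s @ (int d # ?rest)) (int d - 1) =
       tw R (Suc d) s * (- R d) * wm R (int d) ?rest (int d - 1)"
      unfolding wm_append using ws hr by (simp add: sw_def)
    then show ?thesis unfolding e IH using Cons by simp
  qed
qed

lemma wm_walk: "wm R (int d - 1) (walk d t) (int d - 1) = tw R d t"
proof (induction d t rule: walk.induct)
  case (1 d ts)
  show ?case
  proof (cases ts)
    case Nil
    then show ?thesis by (simp add: sw_def nodew_def)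
  next
    case (Cons s ss)
    let ?B = "concat (map (\<lambda>s. walk (Suc d) s @ [int d]) ts)"
    have hB: "hd (?B @ [int d - 1]) = int d + 1" using Cons by simp
    have IH: "\<forall>s\<in>set ts. wm R (int d) (walk (Suc d) s) (int d) = tw R (Suc d) s"
      using 1 by simp
    have "wm R (int d - 1) (walk d (Node ts)) (int d - 1) = sqrt (1 - (R d)\<^sup>2) * wm R (int d) ?B (int d - 1)"
      using hB by (simp add: sw_def)
    also have "\<dots> = sqrt (1 - (R d)\<^sup>2) * (prod_list (map (tw R (Suc d)) ts) * (- R d) ^ (length ts - 1) * sqrt (1 - (R d)\<^sup>2))"
      using wm_block[OF _ IH] Cons by simp
    also have "\<dots> = tw R d (Node ts)" using Cons by (simp add: nodew_def power2_eq_square)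
    finally show ?thesis .
  qed
qed

lemma weight_path: "weight R (path t) = tw R 0 t"
  using wm_walk[of R 0 t] by (simp add: path_def weight_wm)

definition Comp :: "nat \<Rightarrow> nat \<Rightarrow> nat list set" where
  "Comp a c = {cs. length cs = a \<and> sum_list cs = c}"

lemma finite_Comp: "finite (Comp a c)"
proof (rule finite_subset)
  show "Comp a c \<subseteq> {xs. set xs \<subseteq> {..c} \<and> length xs = a}"
    by (auto simp: Comp_def member_le_sum_list)
  show "finite {xs. set xs \<subseteq> {..c} \<and> length xs = a}" by (rule finite_lists_length_eq) simp
qed

fun Hc :: "(nat \<Rightarrow> real) \<Rightarrow> nat \<Rightarrow> nat \<Rightarrow> real" where
  "Hc f 0 c = (if c = 0 then 1 else 0)"
| "Hc f (Suc a) c = (\<Sum>s\<le>c. f s * Hc f a (c - s))"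

lemma Comp_0: "Comp 0 c = (if c = 0 then {[]} else {})"
  by (auto simp: Comp_def)

lemma Comp_Suc: "Comp (Suc a) c = (\<lambda>(s, cs). s # cs) ` (SIGMA s:{..c}. Comp a (c - s))"
proof (rule set_eqI)
  fix xs
  show "xs \<in> Comp (Suc a) c \<longleftrightarrow> xs \<in> (\<lambda>(s, cs). s # cs) ` (SIGMA s:{..c}. Comp a (c - s))"
  proof
    assume "xs \<in> Comp (Suc a) c"
    then obtain s cs where "xs = s # cs" "length cs = a" "s + sum_list cs = c"
      by (cases xs) (auto simp: Comp_def)
    then show "xs \<in> (\<lambda>(s, cs). s # cs) ` (SIGMA s:{..c}. Comp a (c - s))"
      by (auto simp: Comp_def image_iff intro!: bexI[of _ "(s, cs)"])
  next
    assume "xs \<in> (\<lambda>(s, cs). s # cs) ` (SIGMA s:{..c}. Comp a (c - s))"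
    then show "xs \<in> Comp (Suc a) c" by (auto simp: Comp_def)
  qed
qed

lemma comp_sum: "(\<Sum>cs\<in>Comp a c. prod_list (map f cs)) = Hc f a c"
proof (induction a arbitrary: c)
  case 0
  then show ?case by (simp add: Comp_0)
next
  case (Suc a)
  have inj: "inj_on (\<lambda>(s, cs). s # cs) (SIGMA s:{..c}. Comp a (c - s))"
    by (auto simp: inj_on_def)
  have "(\<Sum>cs\<in>Comp (Suc a) c. prod_list (map f cs)) =
     (\<Sum>x\<in>(SIGMA s:{..c}. Comp a (c - s)). prod_list (map f ((\<lambda>(s, cs). s # cs) x)))"
    unfolding Comp_Suc by (rule sum.reindex[OF inj, unfolded comp_def])
  also have "\<dots> = (\<Sum>(s,cs)\<in>(SIGMA s:{..c}. Comp a (c - s)). f s * prod_list (map f cs))"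
    by (rule sum.cong) auto
  also have "\<dots> = (\<Sum>s\<le>c. \<Sum>cs\<in>Comp a (c - s). f s * prod_list (map f cs))"
    by (rule sum.Sigma[symmetric]) (auto simp: finite_Comp)
  also have "\<dots> = (\<Sum>s\<le>c. f s * Hc f a (c - s))"
    by (simp add: sum_distrib_left[symmetric] Suc.IH)
  finally show ?case by simp
qed

definition flev :: "nat \<Rightarrow> tree list \<Rightarrow> nat" where
  "flev n ts = sum_list (map (lev n) ts)"

definition Fset :: "nat \<Rightarrow> (nat \<Rightarrow> nat) \<Rightarrow> tree list set" where
  "Fset h k = {ts. (\<forall>s\<in>set ts. hb s h) \<and> (\<forall>n. flev n ts = k n)}"

definition Psi :: "tree list \<Rightarrow> nat list \<times> tree list" where
  "Psi ts = (map (\<lambda>t. length (kids t)) ts, concat (map kids ts))"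

fun unfl :: "nat list \<Rightarrow> tree list \<Rightarrow> tree list" where
  "unfl [] ts = []"
| "unfl (c # cs) ts = Node (take c ts) # unfl cs (drop c ts)"

lemma unfl_Psi: "unfl (fst (Psi ts)) (snd (Psi ts)) = ts"
proof (induction ts)
  case Nil then show ?case by (simp add: Psi_def)
next
  case (Cons t ts)
  obtain xs where t: "t = Node xs" by (cases t)
  then show ?case using Cons by (simp add: Psi_def)
qed

lemma Psi_inj: "inj Psi"
  by (metis injI unfl_Psi)

lemma Psi_unfl: "sum_list cs = length ts \<Longrightarrow> Psi (unfl cs ts) = (cs, ts)"
proof (induction cs arbitrary: ts)
  case Nil then show ?case by (simp add: Psi_def)
next
  case (Cons c cs)
  have "Psi (unfl cs (drop c ts)) = (cs, drop c ts)" using Cons by simp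
  then show ?case using Cons.prems by (simp add: Psi_def min_def)
qed

lemma flev_0: "flev 0 ts = length ts"
  by (induction ts) (auto simp: flev_def)

lemma flev_Suc: "flev (Suc n) ts = flev n (snd (Psi ts))"
proof (induction ts)
  case Nil then show ?case by (simp add: flev_def Psi_def)
next
  case (Cons t ts)
  obtain xs where t: "t = Node xs" by (cases t)
  then show ?case using Cons by (simp add: flev_def Psi_def)
qed

lemma sum_fst_Psi: "sum_list (fst (Psi ts)) = length (snd (Psi ts))"
  by (induction ts) (auto simp: Psi_def)

lemma length_fst_Psi: "length (fst (Psi ts)) = length ts"
  by (simp add: Psi_def)

lemma hb_Psi: "(\<forall>s\<in>set ts. hb s (Suc h)) \<longleftrightarrow> (\<forall>s\<in>set (snd (Psi ts)). hb s h)"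
proof (induction ts)
  case Nil then show ?case by (simp add: Psi_def)
next
  case (Cons t ts)
  obtain xs where t: "t = Node xs" by (cases t)
  then show ?case using Cons by (auto simp: Psi_def)
qed

lemma tw_Psi: "prod_list (map (tw R d) ts) =
   prod_list (map (nodew R d) (fst (Psi ts))) * prod_list (map (tw R (Suc d)) (snd (Psi ts)))"
proof (induction ts)
  case Nil then show ?case by (simp add: Psi_def)
next
  case (Cons t ts)
  obtain xs where t: "t = Node xs" by (cases t)
  then show ?case using Cons by (simp add: Psi_def)
qed

lemma hb_0: "\<not> hb t 0"
  by (cases t) simp

lemma Psi_Fset: "Psi ` Fset (Suc h) k = Comp (k 0) (k 1) \<times> Fset h (\<lambda>n. k (Suc n))"
proof
  show "Psi ` Fset (Suc h) k \<subseteq> Comp (k 0) (k 1) \<times> Fset h (\<lambda>n. k (Suc n))"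
  proof
    fix x assume "x \<in> Psi ` Fset (Suc h) k"
    then obtain ts where x: "x = Psi ts" and "ts \<in> Fset (Suc h) k" by blast
    then have h: "\<forall>s\<in>set ts. hb s (Suc h)" and f: "\<forall>n. flev n ts = k n" by (auto simp: Fset_def)
    have "fst (Psi ts) \<in> Comp (k 0) (k 1)"
      using f[rule_format, of 0] f[rule_format, of 1] flev_Suc[of 0 ts] flev_0[of ts] flev_0[of "snd (Psi ts)"]
      by (simp add: Comp_def length_fst_Psi sum_fst_Psi)
    moreover have "snd (Psi ts) \<in> Fset h (\<lambda>n. k (Suc n))"
      using h f hb_Psi[of ts h] flev_Suc[of _ ts] by (auto simp: Fset_def)
    ultimately show "x \<in> Comp (k 0) (k 1) \<times> Fset h (\<lambda>n. k (Suc n))"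
      using x by (cases "Psi ts") auto
  qed
next
  show "Comp (k 0) (k 1) \<times> Fset h (\<lambda>n. k (Suc n)) \<subseteq> Psi ` Fset (Suc h) k"
  proof
    fix x assume "x \<in> Comp (k 0) (k 1) \<times> Fset h (\<lambda>n. k (Suc n))"
    then obtain cs ts' where x: "x = (cs, ts')" and c: "cs \<in> Comp (k 0) (k 1)" and t: "ts' \<in> Fset h (\<lambda>n. k (Suc n))"
      by blast
    let ?ts = "unfl cs ts'"
    have sl: "sum_list cs = length ts'"
      using c t flev_0[of ts'] by (auto simp: Comp_def Fset_def)
    have P: "Psi ?ts = (cs, ts')" by (rule Psi_unfl[OF sl])
    have "?ts \<in> Fset (Suc h) k"
      unfolding Fset_def
    proof (intro CollectI conjI allI)
      show "\<forall>s\<in>set ?ts. hb s (Suc h)" using hb_Psi[of ?ts h] P t by (simp add: Fset_def)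
      fix n show "flev n ?ts = k n"
      proof (cases n)
        case 0
        then show ?thesis using flev_0[of ?ts] length_fst_Psi[of ?ts] P c by (simp add: Comp_def)
      next
        case (Suc n')
        then show ?thesis using flev_Suc[of n' ?ts] P t by (simp add: Fset_def)
      qed
    qed
    then show "x \<in> Psi ` Fset (Suc h) k" using P x by force
  qed
qed

lemma forest_thm:
  "(\<forall>n\<ge>h. k n = 0) \<Longrightarrow> finite (Fset h k) \<and>
     (\<Sum>ts\<in>Fset h k. prod_list (map (tw R d) ts)) = (\<Prod>n<h. Hc (nodew R (d + n)) (k n) (k (Suc n)))"
proof (induction h arbitrary: d k)
  case 0
  have "Fset 0 k = {[]}"
  proof
    show "Fset 0 k \<subseteq> {[]}" using hb_0 by (auto simp: Fset_def neq_Nil_conv)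
    show "{[]} \<subseteq> Fset 0 k" using 0 by (auto simp: Fset_def flev_def)
  qed
  then show ?case by simp
next
  case (Suc h)
  let ?k = "\<lambda>n. k (Suc n)"
  have IH: "finite (Fset h ?k) \<and> (\<Sum>ts\<in>Fset h ?k. prod_list (map (tw R (Suc d)) ts)) =
      (\<Prod>n<h. Hc (nodew R (Suc d + n)) (?k n) (?k (Suc n)))"
    using Suc.IH[of ?k "Suc d"] Suc.prems by (simp del: Hc.simps)
  have inj: "inj_on Psi (Fset (Suc h) k)" using Psi_inj by (simp add: inj_on_def inj_def)
  have fin2: "finite (Comp (k 0) (k 1) \<times> Fset h ?k)" using IH finite_Comp by simp
  have fin: "finite (Fset (Suc h) k)"
    by (rule finite_imageD[OF _ inj]) (simp only: Psi_Fset fin2)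
  let ?g = "\<lambda>(cs, ts'). prod_list (map (nodew R d) cs) * prod_list (map (tw R (Suc d)) ts')"
  have "(\<Sum>ts\<in>Fset (Suc h) k. prod_list (map (tw R d) ts)) = (\<Sum>ts\<in>Fset (Suc h) k. ?g (Psi ts))"
    by (rule sum.cong[OF refl]) (simp only: case_prod_beta tw_Psi[of R d])
  also have "\<dots> = (\<Sum>x\<in>Psi ` Fset (Suc h) k. ?g x)"
    by (rule sum.reindex[OF inj, symmetric, unfolded comp_def])
  also have "\<dots> = (\<Sum>x\<in>Comp (k 0) (k 1) \<times> Fset h ?k. ?g x)" by (simp only: Psi_Fset)
  also have "\<dots> = (\<Sum>cs\<in>Comp (k 0) (k 1). prod_list (map (nodew R d) cs)) *
                  (\<Sum>ts'\<in>Fset h ?k. prod_list (map (tw R (Suc d)) ts'))"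
    by (simp only: sum_product sum.cartesian_product)
  also have "\<dots> = Hc (nodew R d) (k 0) (k 1) * (\<Prod>n<h. Hc (nodew R (Suc d + n)) (?k n) (?k (Suc n)))"
    using IH comp_sum[of "nodew R d" "k 0" "k 1"] by (simp del: Hc.simps)
  also have "\<dots> = (\<Prod>n<Suc h. Hc (nodew R (d + n)) (k n) (k (Suc n)))"
    by (subst prod.lessThan_Suc_shift) (simp del: Hc.simps)
  finally show ?case using fin by blast
qed

definition cc :: "nat \<Rightarrow> nat \<Rightarrow> nat" where
  "cc c b = (if c = 0 then (if b = 0 then 1 else 0) else if b = 0 then 0 else (c - 1) choose (b - 1))"

lemma cc_Suc_Suc[simp]: "cc (Suc c) (Suc b) = c choose b" by (simp add: cc_def)
lemma cc_Suc_0[simp]: "cc (Suc c) 0 = 0" by (simp add: cc_def)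
lemma cc_0[simp]: "cc 0 b = (if b = 0 then 1 else 0)" by (simp add: cc_def)
lemma cc_pascal: "c choose b = cc c (Suc b) + cc c b"
  by (cases c; cases b) (auto simp: cc_def)
lemma cc_nz: "cc c b \<noteq> 0 \<Longrightarrow> b \<le> c"
  by (cases c; cases b) (auto simp: cc_def)

definition cl :: "real \<Rightarrow> real \<Rightarrow> real \<Rightarrow> nat \<Rightarrow> nat \<Rightarrow> real" where
  "cl P V Q a c = (\<Sum>b\<le>a. real (a choose b) * real (cc c b) * V ^ (c - b) * P ^ (a - b) * Q ^ b)"

lemma cl_0: "cl P V Q 0 c = (if c = 0 then 1 else 0)"
  by (cases c) (simp_all add: cl_def)

lemma cl_c0: "cl P V Q a 0 = P ^ a"
proof -
  have "cl P V Q a 0 = (\<Sum>b\<le>a. (if b = 0 then P ^ a else 0))"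
    unfolding cl_def by (rule sum.cong) auto
  then show ?thesis by simp
qed

lemma cl_rec: "cl P V Q (Suc a) (Suc c) = V * cl P V Q (Suc a) c + P * cl P V Q a (Suc c) + (Q - P * V) * cl P V Q a c"
proof -
  define m where "m b = V ^ (c - b) * P ^ (a - b) * Q ^ Suc b" for b
  define A where "A a b = real (a choose b)" for a b
  define C where "C c b = real (cc c b)" for c b
  have e1: "cl P V Q (Suc a) (Suc c) = (\<Sum>b\<le>a. A (Suc a) (Suc b) * real (c choose b) * m b)"
    unfolding cl_def by (subst sum.atMost_Suc_shift) (simp add: m_def A_def mult_ac)
  have e2: "V * cl P V Q (Suc a) c = V * C c 0 * V ^ c * P ^ Suc a + (\<Sum>b\<le>a. A (Suc a) (Suc b) * C c (Suc b) * m b)"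
  proof -
    have "V * cl P V Q (Suc a) c = (\<Sum>b\<le>Suc a. V * (real (Suc a choose b) * real (cc c b) * V ^ (c - b) * P ^ (Suc a - b) * Q ^ b))"
      unfolding cl_def by (rule sum_distrib_left)
    also have "\<dots> = V * C c 0 * V ^ c * P ^ Suc a + (\<Sum>b\<le>a. V * (real (Suc a choose Suc b) * real (cc c (Suc b)) * V ^ (c - Suc b) * P ^ (Suc a - Suc b) * Q ^ Suc b))"
      by (subst sum.atMost_Suc_shift) (simp add: C_def)
    also have "(\<Sum>b\<le>a. V * (real (Suc a choose Suc b) * real (cc c (Suc b)) * V ^ (c - Suc b) * P ^ (Suc a - Suc b) * Q ^ Suc b))
        = (\<Sum>b\<le>a. A (Suc a) (Suc b) * C c (Suc b) * m b)"
    proof (rule sum.cong[OF refl])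
      fix b assume "b \<in> {..a}"
      show "V * (real (Suc a choose Suc b) * real (cc c (Suc b)) * V ^ (c - Suc b) * P ^ (Suc a - Suc b) * Q ^ Suc b) = A (Suc a) (Suc b) * C c (Suc b) * m b"
      proof (cases "cc c (Suc b) = 0")
        case True then show ?thesis by (simp add: C_def)
      next
        case False
        then have "Suc b \<le> c" by (rule cc_nz)
        then have "c - b = Suc (c - Suc b)" by simp
        then show ?thesis by (simp add: A_def C_def m_def mult_ac)
      qed
    qed
    finally show ?thesis .
  qed
  have e3: "P * cl P V Q a (Suc c) = (\<Sum>b\<le>a. A a (Suc b) * real (c choose b) * m b)"
  proof -
    have "P * cl P V Q a (Suc c) = (\<Sum>b\<le>Suc a. P * (real (a choose b) * real (cc (Suc c) b) * V ^ (Suc c - b) * P ^ (a - b) * Q ^ b))"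
      unfolding cl_def by (simp add: sum_distrib_left)
    also have "\<dots> = (\<Sum>b\<le>a. P * (real (a choose Suc b) * real (cc (Suc c) (Suc b)) * V ^ (Suc c - Suc b) * P ^ (a - Suc b) * Q ^ Suc b))"
      by (subst sum.atMost_Suc_shift) simp
    also have "\<dots> = (\<Sum>b\<le>a. A a (Suc b) * real (c choose b) * m b)"
    proof (rule sum.cong[OF refl])
      fix b assume "b \<in> {..a}"
      show "P * (real (a choose Suc b) * real (cc (Suc c) (Suc b)) * V ^ (Suc c - Suc b) * P ^ (a - Suc b) * Q ^ Suc b) = A a (Suc b) * real (c choose b) * m b"
      proof (cases "Suc b \<le> a")
        case False then show ?thesis by (simp add: A_def)
      next
        case True
        then have "a - b = Suc (a - Suc b)" by simp
        then show ?thesis by (simp add: A_def m_def mult_ac)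
      qed
    qed
    finally show ?thesis .
  qed
  have e4: "Q * cl P V Q a c = (\<Sum>b\<le>a. A a b * C c b * m b)"
    unfolding cl_def by (simp add: sum_distrib_left A_def C_def m_def mult_ac)
  have e5: "P * V * cl P V Q a c = V * C c 0 * V ^ c * P ^ Suc a + (\<Sum>b\<le>a. A a (Suc b) * C c (Suc b) * m b)"
  proof -
    have "P * V * cl P V Q a c = (\<Sum>b\<le>Suc a. P * V * (real (a choose b) * real (cc c b) * V ^ (c - b) * P ^ (a - b) * Q ^ b))"
      unfolding cl_def by (simp add: sum_distrib_left)
    also have "\<dots> = V * C c 0 * V ^ c * P ^ Suc a + (\<Sum>b\<le>a. P * V * (real (a choose Suc b) * real (cc c (Suc b)) * V ^ (c - Suc b) * P ^ (a - Suc b) * Q ^ Suc b))"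
      by (subst sum.atMost_Suc_shift) (simp add: C_def mult_ac)
    also have "(\<Sum>b\<le>a. P * V * (real (a choose Suc b) * real (cc c (Suc b)) * V ^ (c - Suc b) * P ^ (a - Suc b) * Q ^ Suc b))
        = (\<Sum>b\<le>a. A a (Suc b) * C c (Suc b) * m b)"
    proof (rule sum.cong[OF refl])
      fix b assume "b \<in> {..a}"
      show "P * V * (real (a choose Suc b) * real (cc c (Suc b)) * V ^ (c - Suc b) * P ^ (a - Suc b) * Q ^ Suc b) = A a (Suc b) * C c (Suc b) * m b"
      proof (cases "cc c (Suc b) = 0 \<or> \<not> Suc b \<le> a")
        case True then show ?thesis by (auto simp: C_def A_def)
      next
        case False
        then have "Suc b \<le> c" "Suc b \<le> a" using cc_nz by auto
        then have "c - b = Suc (c - Suc b)" "a - b = Suc (a - Suc b)" by simp_all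
        then show ?thesis by (simp add: A_def C_def m_def mult_ac)
      qed
    qed
    finally show ?thesis .
  qed
  have key: "\<And>b. A (Suc a) (Suc b) * real (c choose b) =
      A (Suc a) (Suc b) * C c (Suc b) + A a (Suc b) * real (c choose b) + A a b * C c b - A a (Suc b) * C c (Suc b)"
  proof -
    fix b
    have p1: "A (Suc a) (Suc b) = A a b + A a (Suc b)" by (simp add: A_def)
    have p2: "real (c choose b) = C c (Suc b) + C c b" by (simp add: C_def cc_pascal)
    show "?thesis b" unfolding p1 p2 by (simp add: algebra_simps)
  qed
  have "V * cl P V Q (Suc a) c + P * cl P V Q a (Suc c) + (Q - P * V) * cl P V Q a c
      = V * cl P V Q (Suc a) c + P * cl P V Q a (Suc c) + Q * cl P V Q a c - P * V * cl P V Q a c"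
    by (simp add: algebra_simps)
  also have "\<dots> = (\<Sum>b\<le>a. A (Suc a) (Suc b) * C c (Suc b) * m b) + (\<Sum>b\<le>a. A a (Suc b) * real (c choose b) * m b)
      + (\<Sum>b\<le>a. A a b * C c b * m b) - (\<Sum>b\<le>a. A a (Suc b) * C c (Suc b) * m b)"
    unfolding e2 e3 e4 e5 by simp
  also have "\<dots> = (\<Sum>b\<le>a. (A (Suc a) (Suc b) * C c (Suc b) + A a (Suc b) * real (c choose b) + A a b * C c b - A a (Suc b) * C c (Suc b)) * m b)"
    by (simp add: sum.distrib sum_subtractf algebra_simps)
  also have "\<dots> = (\<Sum>b\<le>a. A (Suc a) (Suc b) * real (c choose b) * m b)"
    using key by simp
  finally show ?thesis using e1 by simp
qed

definition fw :: "real \<Rightarrow> real \<Rightarrow> real \<Rightarrow> nat \<Rightarrow> real" where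
  "fw P V Q s = (if s = 0 then P else Q * V ^ (s - 1))"

lemma Hc_Suc_0: "Hc f (Suc a) 0 = f 0 * Hc f a 0" by simp

lemma Hc_rec: "Hc (fw P V Q) (Suc a) (Suc c) = V * Hc (fw P V Q) (Suc a) c + P * Hc (fw P V Q) a (Suc c) + (Q - P * V) * Hc (fw P V Q) a c"
proof -
  define h where "h s = Hc (fw P V Q) a s" for s
  have S: "(\<Sum>s\<le>c. Q * V ^ s * h (c - s)) = V * (\<Sum>s\<le>c. fw P V Q s * h (c - s)) + (Q - P * V) * h c"
  proof (cases c)
    case 0 then show ?thesis by (simp add: fw_def algebra_simps)
  next
    case (Suc c')
    have "(\<Sum>s\<le>c. Q * V ^ s * h (c - s)) = Q * h (Suc c') + (\<Sum>s\<le>c'. Q * V ^ Suc s * h (c' - s))"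
      unfolding Suc by (subst sum.atMost_Suc_shift) simp
    moreover have "(\<Sum>s\<le>c. fw P V Q s * h (c - s)) = P * h (Suc c') + (\<Sum>s\<le>c'. Q * V ^ s * h (c' - s))"
      unfolding Suc by (subst sum.atMost_Suc_shift) (simp add: fw_def)
    ultimately show ?thesis unfolding Suc by (simp add: sum_distrib_left algebra_simps)
  qed
  have "Hc (fw P V Q) (Suc a) (Suc c) = P * h (Suc c) + (\<Sum>s\<le>c. Q * V ^ s * h (c - s))"
    by (simp only: Hc.simps h_def[symmetric]) (subst sum.atMost_Suc_shift, simp add: fw_def)
  also have "\<dots> = V * Hc (fw P V Q) (Suc a) c + P * h (Suc c) + (Q - P * V) * h c"
    unfolding S by (simp add: h_def)
  finally show ?thesis by (simp add: h_def)
qed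

lemma Hc_cl: "Hc (fw P V Q) a c = cl P V Q a c"
proof (induction a arbitrary: c)
  case 0 then show ?case by (simp add: cl_0)
next
  case (Suc a)
  note outer = Suc.IH
  show ?case
  proof (induction c)
    case 0
    show ?case using outer[of 0] by (simp add: cl_c0 fw_def del: Hc.simps) (simp add: cl_c0)
  next
    case (Suc c)
    then show ?case using Hc_rec[of P V Q a c] cl_rec[of P V Q a c] outer[of c] outer[of "Suc c"] by (simp del: Hc.simps)
  qed
qed

lemma cl_range: "cl P V Q a c = (\<Sum>b\<in>{min 1 c..min a c}. real (a choose b) * real ((c - min 1 c) choose (b - min 1 c)) * V ^ (c - b) * P ^ (a - b) * Q ^ b)"
  unfolding cl_def
proof (rule sum.mono_neutral_cong_right)
  show "finite {..a}" by simp
  show "{min 1 c..min a c} \<subseteq> {..a}" by auto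
  show "\<forall>b\<in>{..a} - {min 1 c..min a c}. real (a choose b) * real (cc c b) * V ^ (c - b) * P ^ (a - b) * Q ^ b = 0"
  proof
    fix b assume b: "b \<in> {..a} - {min 1 c..min a c}"
    have "cc c b = 0"
    proof (cases c)
      case 0 then show ?thesis using b by auto
    next
      case (Suc c') then show ?thesis using b by (cases b) auto
    qed
    then show "real (a choose b) * real (cc c b) * V ^ (c - b) * P ^ (a - b) * Q ^ b = 0" by simp
  qed
  fix b assume b: "b \<in> {min 1 c..min a c}"
    have "cc c b = (c - min 1 c) choose (b - min 1 c)"
    proof (cases c)
      case 0 then show ?thesis using b by auto
    next
      case (Suc c') then show ?thesis using b by (cases b) auto
    qed
    then show "real (a choose b) * real (cc c b) * V ^ (c - b) * P ^ (a - b) * Q ^ b =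
     real (a choose b) * real ((c - min 1 c) choose (b - min 1 c)) * V ^ (c - b) * P ^ (a - b) * Q ^ b" by simp
qed

theorem theorem6p3:
  fixes M :: nat and R :: "nat \<Rightarrow> real" and k :: "nat \<Rightarrow> nat"
  assumes "M \<ge> 1"
    and "\<forall>n \<le> M. -1 < R n \<and> R n < 1"
    and "k \<in> Lset M"
  defines "T \<equiv> (\<lambda>n. sqrt (1 - (R n)\<^sup>2))"
    and "u \<equiv> uvec M k"
  shows "finite {p \<in> scat_seqs M. kappa p = k}
    \<and> (\<Sum>p\<in>{p \<in> scat_seqs M. kappa p = k}. weight R p) =
      (\<Sum>b\<in>Vset M k.
         (\<Prod>n\<le>M. real (k n choose b n)) *
         (\<Prod>n\<le>M. real ((ktil M k n - u n) choose (b n - u n))) *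
         (\<Prod>n\<le>M. (- R n) ^ (ktil M k n - b n)) *
         (\<Prod>n\<le>M. R n ^ (k n - b n)) *
         (\<Prod>n\<le>M. T n ^ (2 * b n)))
    \<and> (\<Sum>p\<in>{p \<in> scat_seqs M. kappa p = k}. weight R p) = amp_poly M R k"
proof -
  have k0: "k 0 = 1" and kM: "\<forall>n>M. k n = 0" using assms(3) by (auto simp: Lset_def)
  define Tset where "Tset = {t. hb t (Suc M) \<and> (\<lambda>n. lev n t) = k}"
  let ?S = "{p \<in> scat_seqs M. kappa p = k}"
  have S_eq: "?S = path ` Tset"
    unfolding scat_char Tset_def using kappa_path by auto
  have F_eq: "Fset (Suc M) k = (\<lambda>t. [t]) ` Tset"
  proof
    show "Fset (Suc M) k \<subseteq> (\<lambda>t. [t]) ` Tset"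
    proof
      fix ts assume ts: "ts \<in> Fset (Suc M) k"
      then have "length ts = 1" using flev_0[of ts] k0 by (auto simp: Fset_def)
      then obtain t where t: "ts = [t]" by (auto simp: length_Suc_conv)
      have "t \<in> Tset" using ts t by (auto simp: Fset_def Tset_def flev_def)
      then show "ts \<in> (\<lambda>t. [t]) ` Tset" using t by blast
    qed
    show "(\<lambda>t. [t]) ` Tset \<subseteq> Fset (Suc M) k"
      by (auto simp: Fset_def Tset_def flev_def)
  qed
  have kz: "\<forall>n\<ge>Suc M. k n = 0" using kM by auto
  from forest_thm[OF kz, of R 0]
  have finF: "finite (Fset (Suc M) k)"
    and sumF: "(\<Sum>ts\<in>Fset (Suc M) k. prod_list (map (tw R 0) ts)) =
               (\<Prod>n<Suc M. Hc (nodew R n) (k n) (k (Suc n)))" by auto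
  have injL: "inj_on (\<lambda>t. [t]) Tset" by (auto simp: inj_on_def)
  have finT: "finite Tset" using finF unfolding F_eq using finite_imageD[OF _ injL] by blast
  have finS: "finite ?S" unfolding S_eq using finT by simp
  have injP: "inj_on path Tset" using path_inj by (simp add: inj_on_def inj_def)
  define I where "I n = {uvec M k n..min (k n) (ktil M k n)}" for n
  define tm where "tm n b = real (k n choose b) * real ((ktil M k n - uvec M k n) choose (b - uvec M k n)) *
       (- R n) ^ (ktil M k n - b) * R n ^ (k n - b) * (T n ^ 2) ^ b" for n b
  have ktil_eq: "\<And>n. n \<le> M \<Longrightarrow> ktil M k n = k (Suc n)"
    using kM by (auto simp: ktil_def)
  have nodew_fw: "\<And>n. nodew R n = fw (R n) (- R n) (T n ^ 2)"
    by (auto simp: nodew_def fw_def T_def)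
  have "(\<Sum>p\<in>?S. weight R p) = (\<Sum>t\<in>Tset. weight R (path t))"
    unfolding S_eq by (rule sum.reindex[OF injP, unfolded comp_def])
  also have "\<dots> = (\<Sum>t\<in>Tset. prod_list (map (tw R 0) [t]))"
    by (simp add: weight_path)
  also have "\<dots> = (\<Sum>ts\<in>Fset (Suc M) k. prod_list (map (tw R 0) ts))"
    unfolding F_eq by (rule sum.reindex[OF injL, unfolded comp_def, symmetric])
  also have "\<dots> = (\<Prod>n\<le>M. Hc (nodew R n) (k n) (k (Suc n)))"
    using sumF by (simp add: lessThan_Suc_atMost)
  also have "\<dots> = (\<Prod>n\<le>M. \<Sum>b\<in>I n. tm n b)"
  proof (rule prod.cong[OF refl])
    fix n assume n: "n \<in> {..M}"
    show "Hc (nodew R n) (k n) (k (Suc n)) = (\<Sum>b\<in>I n. tm n b)"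
      unfolding nodew_fw Hc_cl cl_range I_def tm_def uvec_def using ktil_eq[of n] n
      by (simp add: mult_ac)
  qed
  also have "\<dots> = (\<Sum>g\<in>PiE {..M} I. \<Prod>n\<le>M. tm n (g n))"
    by (rule prod_sum_PiE) (auto simp: I_def)
  also have "\<dots> = (\<Sum>b\<in>Vset M k. \<Prod>n\<le>M. tm n (b n))"
  proof (rule sum.reindex_bij_witness[of _ "\<lambda>b. restrict b {..M}" "\<lambda>g n. if n \<le> M then g n else 0"])
    fix g assume "g \<in> PiE {..M} I"
    then show "restrict (\<lambda>n. if n \<le> M then g n else 0) {..M} = g"
      by (auto simp: PiE_def extensional_def restrict_def fun_eq_iff)
  next
    fix g assume g: "g \<in> PiE {..M} I"
    then show "(\<lambda>n. if n \<le> M then g n else 0) \<in> Vset M k"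
      by (auto simp: Vset_def I_def PiE_def Pi_def)
  next
    fix b assume "b \<in> Vset M k"
    then show "(\<lambda>n. if n \<le> M then restrict b {..M} n else 0) = b"
      by (auto simp: Vset_def fun_eq_iff)
  next
    fix b assume "b \<in> Vset M k"
    then show "restrict b {..M} \<in> PiE {..M} I"
      by (auto simp: Vset_def I_def)
  next
    fix g assume "g \<in> PiE {..M} I"
    show "(\<Prod>n\<le>M. tm n (if n \<le> M then g n else 0)) = (\<Prod>n\<le>M. tm n (g n))"
      by (rule prod.cong) auto
  qed
  finally have main: "(\<Sum>p\<in>?S. weight R p) = (\<Sum>b\<in>Vset M k. \<Prod>n\<le>M. tm n (b n))" .
  have eq2: "(\<Sum>b\<in>Vset M k. \<Prod>n\<le>M. tm n (b n)) =
      (\<Sum>b\<in>Vset M k.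
         (\<Prod>n\<le>M. real (k n choose b n)) *
         (\<Prod>n\<le>M. real ((ktil M k n - u n) choose (b n - u n))) *
         (\<Prod>n\<le>M. (- R n) ^ (ktil M k n - b n)) *
         (\<Prod>n\<le>M. R n ^ (k n - b n)) *
         (\<Prod>n\<le>M. T n ^ (2 * b n)))"
    by (rule sum.cong[OF refl]) (simp add: tm_def u_def prod.distrib power_mult)
  have eq3: "(\<Sum>b\<in>Vset M k. \<Prod>n\<le>M. tm n (b n)) = amp_poly M R k"
    unfolding amp_poly_def
  proof (rule sum.cong[OF refl])
    fix b assume "b \<in> Vset M k"
    have "(\<Prod>n\<le>M. tm n (b n)) = (\<Prod>n\<le>M. real (k n choose b n) *
       real ((ktil M k n - uvec M k n) choose (b n - uvec M k n)) *
       (- R n) ^ (ktil M k n - b n) * R n ^ (k n - b n) * (1 - (R n)\<^sup>2) ^ b n)"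
    proof (rule prod.cong[OF refl])
      fix n assume "n \<in> {..M}"
      then have "\<bar>R n\<bar> < 1" using assms(2) by auto
      then have "0 \<le> 1 - (R n)\<^sup>2" by (simp add: abs_square_less_1 less_imp_le)
      then have "T n ^ 2 = 1 - (R n)\<^sup>2" by (simp add: T_def)
      then show "tm n (b n) = real (k n choose b n) *
       real ((ktil M k n - uvec M k n) choose (b n - uvec M k n)) *
       (- R n) ^ (ktil M k n - b n) * R n ^ (k n - b n) * (1 - (R n)\<^sup>2) ^ b n"
        by (simp add: tm_def)
    qed
    then show "(\<Prod>n\<le>M. tm n (b n)) =
       (\<Prod>n\<le>M. real (k n choose b n)) *
       (\<Prod>n\<le>M. real ((ktil M k n - uvec M k n) choose (b n - uvec M k n))) *
       (\<Prod>n\<le>M. (- R n) ^ (ktil M k n - b n)) *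
       (\<Prod>n\<le>M. R n ^ (k n - b n)) *
       (\<Prod>n\<le>M. (1 - (R n)\<^sup>2) ^ b n)"
      by (simp add: prod.distrib)
  qed
  show ?thesis using finS main eq2 eq3 by simp
qed

end
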